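(* Let $\Theta\subseteq\mathbb{R}^p$ be open and $\rho_\theta=|\psi_\theta\rangle\langle\psi_\theta|$, $\theta=(\theta^1,\dots,\theta^p)\in\Theta$, a non-degenerate differentiable family of pure states on $\mathbb{C}^d$. If at some $\theta$ there exists a POVM $M$ with $F^M_\theta=H_\theta$ (i.e. $H_\theta$ is attainable), then $p\le d-1$.
   Context: Non-degenerate means that for each $\theta$ the matrices $\partial\rho_\theta/\partial\theta^1,\dots,\partial\rho_\theta/\partial\theta^p$ are linearly independent over $\mathbb{R}$. $H_\theta$ is the SLD quantum information matrix, $(H_\theta)_{jk}=\mathrm{Re}\,\mathrm{tr}\{\lambda^j\rho_\theta\lambda^k\}$ with $\lambda^j$ Hermitian solving $\frac{\partial\rho_\theta}{\partial\theta^j}=\frac12(\rho_\theta\lambda^j+\lambda^j\rho_\theta)$. A POVM is a finite family $M=\{M_m\}$ of positive semidefinite matrices summing to $\mathbb{I}$; with $p(m;\theta)=\mathrm{tr}\{\rho_\theta M_m\}$, its Fisher information matrix is $(F^M_\theta)_{jk}=\sum_{m:p(m;\theta)>0}\frac{1}{p(m;\theta)}\frac{\partial p(m;\theta)}{\partial\theta^j}\frac{\partial p(m;\theta)}{\partial\theta^k}$. *)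

theory Defs
  imports "HOL-Analysis.Analysis"
begin

text \<open>Matrices on C^d are complex^'d^'d; parameters live in real^'p (p = CARD('p), d = CARD('d)).\<close>

definition adjoint_mat :: "complex^'d^'d \<Rightarrow> complex^'d^'d" where
  "adjoint_mat A = (\<chi> i j. cnj (A $ j $ i))"

definition hermitian_mat :: "complex^'d^'d \<Rightarrow> bool" where
  "hermitian_mat A \<longleftrightarrow> adjoint_mat A = A"

definition psd_mat :: "complex^'d^'d \<Rightarrow> bool" where
  "psd_mat A \<longleftrightarrow> (\<forall>x::complex^'d.
     let q = (\<Sum>i\<in>UNIV. \<Sum>j\<in>UNIV. cnj (x $ i) * A $ i $ j * x $ j) in Im q = 0 \<and> Re q \<ge> 0)"

definition ket_bra :: "complex^'d \<Rightarrow> complex^'d^'d" where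
  "ket_bra v = (\<chi> i j. v $ i * cnj (v $ j))"

definition partial_deriv :: "(real^'p \<Rightarrow> 'b::real_normed_vector) \<Rightarrow> real^'p \<Rightarrow> 'p \<Rightarrow> 'b" where
  "partial_deriv f \<theta> j = frechet_derivative f (at \<theta>) (axis j 1)"

definition nondegenerate :: "(real^'p \<Rightarrow> complex^'d^'d) \<Rightarrow> (real^'p) set \<Rightarrow> bool" where
  "nondegenerate \<rho> \<Theta> \<longleftrightarrow> (\<forall>\<theta>\<in>\<Theta>. \<forall>c::'p \<Rightarrow> real.
      (\<Sum>j\<in>UNIV. c j *\<^sub>R partial_deriv \<rho> \<theta> j) = 0 \<longrightarrow> (\<forall>j. c j = 0))"

definition is_SLD :: "(real^'p \<Rightarrow> complex^'d^'d) \<Rightarrow> real^'p \<Rightarrow> 'p \<Rightarrow> complex^'d^'d \<Rightarrow> bool" where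
  "is_SLD \<rho> \<theta> j L \<longleftrightarrow> hermitian_mat L \<and>
     partial_deriv \<rho> \<theta> j = (1/2::real) *\<^sub>R (\<rho> \<theta> ** L + L ** \<rho> \<theta>)"

definition SLD :: "(real^'p \<Rightarrow> complex^'d^'d) \<Rightarrow> real^'p \<Rightarrow> 'p \<Rightarrow> complex^'d^'d" where
  "SLD \<rho> \<theta> j = (SOME L. is_SLD \<rho> \<theta> j L)"

definition SLD_info :: "(real^'p \<Rightarrow> complex^'d^'d) \<Rightarrow> real^'p \<Rightarrow> 'p \<Rightarrow> 'p \<Rightarrow> real" where
  "SLD_info \<rho> \<theta> j k = Re (trace (SLD \<rho> \<theta> j ** \<rho> \<theta> ** SLD \<rho> \<theta> k))"

definition is_POVM :: "'m set \<Rightarrow> ('m \<Rightarrow> complex^'d^'d) \<Rightarrow> bool" where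
  "is_POVM I M \<longleftrightarrow> finite I \<and> (\<forall>m\<in>I. psd_mat (M m)) \<and> (\<Sum>m\<in>I. M m) = mat 1"

definition outcome_prob :: "(real^'p \<Rightarrow> complex^'d^'d) \<Rightarrow> ('m \<Rightarrow> complex^'d^'d) \<Rightarrow> 'm \<Rightarrow> real^'p \<Rightarrow> real" where
  "outcome_prob \<rho> M m \<theta> = Re (trace (\<rho> \<theta> ** M m))"

definition fisher_info :: "(real^'p \<Rightarrow> complex^'d^'d) \<Rightarrow> 'm set \<Rightarrow> ('m \<Rightarrow> complex^'d^'d)
    \<Rightarrow> real^'p \<Rightarrow> 'p \<Rightarrow> 'p \<Rightarrow> real" where
  "fisher_info \<rho> I M \<theta> j k =
     (\<Sum>m\<in>{m\<in>I. outcome_prob \<rho> M m \<theta> > 0}.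
        partial_deriv (outcome_prob \<rho> M m) \<theta> j * partial_deriv (outcome_prob \<rho> M m) \<theta> k
        / outcome_prob \<rho> M m \<theta>)"

end

theory Submission
  imports Defs "HOL-Library.Cardinality"
begin


definition cinner :: "complex^'d \<Rightarrow> complex^'d \<Rightarrow> complex" where
  "cinner x y = (\<Sum>i\<in>UNIV. cnj (x$i) * y$i)"

lemma cinner_matvec_adj: "cinner x (A *v y) = cinner (adjoint_mat A *v x) y"
  unfolding cinner_def matrix_vector_mult_def adjoint_mat_def
  apply (simp add: sum_distrib_left sum_distrib_right cnj_sum)
  apply (subst sum.swap)
  apply (simp add: mult_ac)
  done

lemma trace_ketbra_left: "trace (ket_bra v ** A) = cinner v (A *v v)"
  unfolding cinner_def matrix_vector_mult_def ket_bra_def trace_def matrix_matrix_mult_def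
  apply (simp add: sum_distrib_left sum_distrib_right)
  apply (subst sum.swap)
  apply (simp add: mult_ac)
  done

lemma ketbra_mult_left: "ket_bra v ** A = (\<chi> i k. v$i * cnj ((adjoint_mat A *v v)$k))"
  unfolding matrix_vector_mult_def ket_bra_def adjoint_mat_def matrix_matrix_mult_def
  by (simp add: sum_distrib_left mult_ac vec_eq_iff)

lemma mult_ketbra_right: "A ** ket_bra v = (\<chi> i k. (A *v v)$i * cnj (v$k))"
  unfolding matrix_vector_mult_def ket_bra_def matrix_matrix_mult_def
  by (auto simp: vec_eq_iff sum_distrib_right intro!: sum.cong)

lemma cinner_self: "cinner x x = of_real ((norm x)^2)"
proof -
  have "\<And>z. cnj z * z = (complex_of_real (cmod z))^2"
    by (metis complex_norm_square of_real_power mult.commute)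
  then show ?thesis
    unfolding cinner_def norm_vec_def L2_set_def
    by (simp add: sum_nonneg)
qed

lemma ketbra_herm: "adjoint_mat (ket_bra v) = ket_bra v"
  unfolding adjoint_mat_def ket_bra_def by (simp add: vec_eq_iff mult.commute)

lemma trace_ketbra: "trace (ket_bra v) = cinner v v"
  unfolding cinner_def ket_bra_def trace_def by (simp add: mult.commute)


lemma ketbra_mv: "ket_bra v *v w = cinner v w *s v"
  unfolding ket_bra_def matrix_vector_mult_def cinner_def
  by (simp add: vec_eq_iff sum_distrib_left mult_ac)

lemma ketbra_idem: "cinner v v = 1 \<Longrightarrow> ket_bra v ** ket_bra v = ket_bra v"
  unfolding mult_ketbra_right ketbra_mv
  by (simp add: vec_eq_iff ket_bra_def)

lemma cinner_add_left: "cinner (x + y) z = cinner x z + cinner y z"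
  by (simp add: cinner_def algebra_simps sum.distrib)
lemma cinner_add_right: "cinner x (y + z) = cinner x y + cinner x z"
  by (simp add: cinner_def algebra_simps sum.distrib)
lemma cinner_diff_left: "cinner (x - y) z = cinner x z - cinner y z"
  by (simp add: cinner_def algebra_simps sum_subtractf)
lemma cinner_diff_right: "cinner x (y - z) = cinner x y - cinner x z"
  by (simp add: cinner_def algebra_simps sum_subtractf)
lemma cinner_scale_left: "cinner (c *s x) z = cnj c * cinner x z"
  by (simp add: cinner_def algebra_simps sum_distrib_left)
lemma cinner_scale_right: "cinner x (c *s z) = c * cinner x z"
  by (simp add: cinner_def algebra_simps sum_distrib_left)
lemma cinner_scaleR_left: "cinner (r *\<^sub>R x) z = of_real r * cinner x z"
  unfolding cinner_def vector_scaleR_component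
  by (simp add: scaleR_conv_of_real sum_distrib_left mult_ac)
lemma cinner_scaleR_right: "cinner x (r *\<^sub>R z) = of_real r * cinner x z"
  unfolding cinner_def vector_scaleR_component
  by (simp add: scaleR_conv_of_real sum_distrib_left mult_ac)
lemma cinner_zero_left[simp]: "cinner 0 z = 0" by (simp add: cinner_def)
lemma cinner_zero_right[simp]: "cinner z 0 = 0" by (simp add: cinner_def)
lemma cinner_sum_left: "finite A \<Longrightarrow> cinner (\<Sum>a\<in>A. f a) z = (\<Sum>a\<in>A. cinner (f a) z)"
  by (induct A rule: finite_induct) (auto simp: cinner_add_left)
lemma cinner_sum_right: "finite A \<Longrightarrow> cinner z (\<Sum>a\<in>A. f a) = (\<Sum>a\<in>A. cinner z (f a))"
  by (induct A rule: finite_induct) (auto simp: cinner_add_right)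
lemma cinner_cnj: "cinner y x = cnj (cinner x y)"
  by (simp add: cinner_def mult.commute)
lemma cinner_self_eq0: "cinner x x = 0 \<longleftrightarrow> x = 0"
  by (simp add: cinner_self)

lemma mv_add: "(A::complex^'d^'d) *v (x + y) = A *v x + A *v y"
  by (simp add: matrix_vector_right_distrib)
lemma mv_diff: "(A::complex^'d^'d) *v (x - y) = A *v x - A *v y"
  by (simp add: vec_eq_iff matrix_vector_mult_def algebra_simps sum_subtractf)
lemma mv_scale: "(A::complex^'d^'d) *v (c *s x) = c *s (A *v x)"
  by (simp add: vec_eq_iff matrix_vector_mult_def algebra_simps sum_distrib_left)
lemma mv_scaleR: "(A::complex^'d^'d) *v (r *\<^sub>R x) = r *\<^sub>R (A *v x)"
  unfolding vec_eq_iff matrix_vector_mult_def vector_scaleR_component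
  by (simp add: scaleR_conv_of_real sum_distrib_left mult_ac)

lemma psd_q: "psd_mat M \<Longrightarrow> Im (cinner x (M *v x)) = 0 \<and> Re (cinner x (M *v x)) \<ge> 0"
proof -
  assume "psd_mat M"
  then have "let q = (\<Sum>i\<in>UNIV. \<Sum>j\<in>UNIV. cnj (x $ i) * M $ i $ j * x $ j) in Im q = 0 \<and> Re q \<ge> 0"
    unfolding psd_mat_def by blast
  moreover have "(\<Sum>i\<in>UNIV. \<Sum>j\<in>UNIV. cnj (x $ i) * M $ i $ j * x $ j) = cinner x (M *v x)"
    by (simp add: cinner_def matrix_vector_mult_def sum_distrib_left mult_ac)
  ultimately show ?thesis by (simp add: Let_def)
qed

lemma psd_herm_form:
  assumes "psd_mat M"
  shows "cinner x (M *v y) = cnj (cinner y (M *v x))"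
proof -
  define a where "a = cinner x (M *v y)"
  define b where "b = cinner y (M *v x)"
  have h1: "Im (cinner (x+y) (M *v (x+y))) = 0" using psd_q[OF assms] by blast
  have h2: "Im (cinner (x + \<i> *s y) (M *v (x + \<i> *s y))) = 0" using psd_q[OF assms] by blast
  have hx: "Im (cinner x (M *v x)) = 0" using psd_q[OF assms] by blast
  have hy: "Im (cinner y (M *v y)) = 0" using psd_q[OF assms] by blast
  have e1: "cinner (x+y) (M *v (x+y)) = cinner x (M *v x) + a + b + cinner y (M *v y)"
    by (simp add: a_def b_def mv_add cinner_add_left cinner_add_right)
  have e2: "cinner (x + \<i> *s y) (M *v (x + \<i> *s y)) = cinner x (M *v x) + \<i> * a - \<i> * b + cinner y (M *v y)"
    by (simp add: a_def b_def mv_add mv_scale cinner_add_left cinner_add_right cinner_scale_left cinner_scale_right algebra_simps)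
  have "Im (a + b) = 0" using h1 e1 hx hy by simp
  moreover have "Re (a - b) = 0" using h2 hx hy unfolding e2 by (simp add: algebra_simps)
  ultimately have "a = cnj b" by (simp add: complex_eq_iff)
  then show ?thesis by (simp add: a_def b_def)
qed




lemma mm_scaleR_left: "((r *\<^sub>R A) ** (B::complex^'d^'d)) = r *\<^sub>R (A ** B)"
  unfolding vec_eq_iff matrix_matrix_mult_def vector_scaleR_component
  by (simp add: scaleR_conv_of_real sum_distrib_left mult_ac)
lemma mm_scaleR_right: "((A::complex^'d^'d) ** (r *\<^sub>R B)) = r *\<^sub>R (A ** B)"
  unfolding vec_eq_iff matrix_matrix_mult_def vector_scaleR_component
  by (simp add: scaleR_conv_of_real sum_distrib_left mult_ac)
lemma matrix_add_rdistrib: "((A + B) ** (C::complex^'d^'d)) = A ** C + B ** C"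
  by (simp add: vec_eq_iff matrix_matrix_mult_def distrib_right sum.distrib)
lemma trace_scaleR: "trace (r *\<^sub>R (A::complex^'d^'d)) = r *\<^sub>R trace A"
  unfolding trace_def vector_scaleR_component by (simp add: scaleR_sum_right)

lemma bilinear_mm: "bilinear ((**) :: complex^'d^'d \<Rightarrow> complex^'d^'d \<Rightarrow> complex^'d^'d)"
  unfolding bilinear_def
  by (auto intro!: linearI simp: matrix_add_ldistrib matrix_add_rdistrib mm_scaleR_left mm_scaleR_right)

lemma bl_mm: "bounded_bilinear ((**) :: complex^'d^'d \<Rightarrow> complex^'d^'d \<Rightarrow> complex^'d^'d)"
  using bilinear_mm bilinear_conv_bounded_bilinear by blast

lemma bl_adj: "bounded_linear (adjoint_mat :: complex^'d^'d \<Rightarrow> complex^'d^'d)"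
  unfolding linear_conv_bounded_linear[symmetric]
  by (rule linearI) (simp_all add: adjoint_mat_def vec_eq_iff)

lemma bl_trace: "bounded_linear (trace :: complex^'d^'d \<Rightarrow> complex)"
  unfolding linear_conv_bounded_linear[symmetric]
  by (rule linearI) (simp_all add: trace_add trace_scaleR)

lemma bl_prob: "bounded_linear (\<lambda>X::complex^'d^'d. Re (trace (X ** M)))"
  unfolding linear_conv_bounded_linear[symmetric]
  by (rule linearI) (simp_all add: trace_add matrix_add_rdistrib mm_scaleR_left trace_scaleR)

lemma deriv_facts:
  fixes \<psi> :: "real^'p \<Rightarrow> complex^'d"
  assumes "open \<Theta>" "\<forall>t\<in>\<Theta>. norm (\<psi> t) = 1"
    and "(\<lambda>s. ket_bra (\<psi> s)) differentiable (at \<theta>)" "\<theta> \<in> \<Theta>"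
  defines "D \<equiv> frechet_derivative (\<lambda>s. ket_bra (\<psi> s)) (at \<theta>)"
  shows "((\<lambda>s. ket_bra (\<psi> s)) has_derivative D) (at \<theta>)"
    and "\<And>h. adjoint_mat (D h) = D h"
    and "\<And>h. D h = ket_bra (\<psi> \<theta>) ** D h + D h ** ket_bra (\<psi> \<theta>)"
    and "\<And>h. trace (D h) = 0"
proof -
  let ?r = "\<lambda>s. ket_bra (\<psi> s)"
  show d: "(?r has_derivative D) (at \<theta>)"
    using assms(3) unfolding D_def by (simp add: frechet_derivative_works)
  have "((\<lambda>s. adjoint_mat (?r s)) has_derivative (\<lambda>h. adjoint_mat (D h))) (at \<theta>)"
    by (rule bounded_linear.has_derivative[OF bl_adj d])
  then have "(?r has_derivative (\<lambda>h. adjoint_mat (D h))) (at \<theta>)"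
    by (simp add: ketbra_herm)
  from has_derivative_unique[OF d this] show "\<And>h. adjoint_mat (D h) = D h"
    by metis
  have "((\<lambda>s. ?r s ** ?r s) has_derivative (\<lambda>h. ?r \<theta> ** D h + D h ** ?r \<theta>)) (at \<theta>)"
    by (rule bounded_bilinear.FDERIV[OF bl_mm d d])
  then have "(?r has_derivative (\<lambda>h. ?r \<theta> ** D h + D h ** ?r \<theta>)) (at \<theta>)"
    apply (rule has_derivative_transform_within_open[OF _ assms(1) assms(4)])
    using assms(2) by (simp add: ketbra_idem cinner_self)
  from has_derivative_unique[OF d this]
  show "\<And>h. D h = ket_bra (\<psi> \<theta>) ** D h + D h ** ket_bra (\<psi> \<theta>)" by metis
  have t1: "((\<lambda>s. trace (?r s)) has_derivative (\<lambda>h. trace (D h))) (at \<theta>)"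
    by (rule bounded_linear.has_derivative[OF bl_trace d])
  have "((\<lambda>s. 1::complex) has_derivative (\<lambda>h. 0)) (at \<theta>)" by simp
  then have "((\<lambda>s. trace (?r s)) has_derivative (\<lambda>h. 0)) (at \<theta>)"
    apply (rule has_derivative_transform_within_open[OF _ assms(1) assms(4)])
    using assms(2) by (simp add: trace_ketbra cinner_self)
  from has_derivative_unique[OF t1 this] show "\<And>h. trace (D h) = 0" by metis
qed




lemma psd_Z:
  assumes M: "psd_mat M" and x0: "cinner x (M *v x) = 0"
  shows "cinner y (M *v x) = 0"
proof -
  define z where "z = cinner y (M *v x)"
  define R where "R = Re (cinner y (M *v y))"
  define K where "K = (cmod z)^2"
  have R0: "R \<ge> 0" using psd_q[OF M] R_def by blast
  have Rim: "Im (cinner y (M *v y)) = 0" using psd_q[OF M] by blast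
  have xy: "cinner x (M *v y) = cnj z" using psd_herm_form[OF M, of x y] z_def by simp
  define s :: real where "s = - 1 / (R + 1)"
  define w where "w = (of_real s * z) *s y"
  have "cinner (x + w) (M *v (x + w)) = cinner x (M *v x) + cinner x (M *v w) + cinner w (M *v x) + cinner w (M *v w)"
    by (simp add: mv_add cinner_add_left cinner_add_right)
  also have "\<dots> = of_real s * z * cnj z + of_real s * cnj z * z + of_real s * cnj z * (of_real s * z) * cinner y (M *v y)"
    unfolding w_def by (simp add: x0 mv_scale cinner_scale_left cinner_scale_right xy z_def mult_ac)
  also have "\<dots> = (of_real s * 2 + of_real s * of_real s * cinner y (M *v y)) * (z * cnj z)"
    by (simp add: algebra_simps)
  also have "\<dots> = (of_real s * 2 + of_real s * of_real s * cinner y (M *v y)) * of_real K"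
    unfolding K_def by (metis complex_norm_square)
  finally have e: "Re (cinner (x + w) (M *v (x + w))) = 2 * s * K + s * s * K * R"
    using Rim unfolding R_def by (simp add: algebra_simps)
  have "Re (cinner (x + w) (M *v (x + w))) \<ge> 0" using psd_q[OF M] by blast
  with e have ge: "K * (2 * s + s * s * R) \<ge> 0" by (simp add: algebra_simps)
  have "2 * s + s * s * R < 0"
  proof -
    have p: "R + 1 > 0" using R0 by linarith
    have s0: "s < 0" unfolding s_def using p by simp
    have "s * R = - (R / (R + 1))" unfolding s_def by simp
    moreover have "R / (R + 1) < 1" using p by simp
    ultimately have "2 + s * R > 0" by linarith
    then have "s * (2 + s * R) < 0" using s0 by (simp add: mult_neg_pos)
    then show ?thesis by (simp add: algebra_simps)
  qed
  with ge have "K \<le> 0" by (simp add: mult_le_0_iff zero_le_mult_iff)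
  then have "K = 0" unfolding K_def by (simp add: antisym)
  then show ?thesis unfolding K_def z_def by simp
qed


lemma psd_quad:
  assumes M: "psd_mat M"
  shows "Re (cinner (b - t *\<^sub>R v) (M *v (b - t *\<^sub>R v)))
     = Re (cinner b (M *v b)) - 2 * t * Re (cinner v (M *v b)) + t * t * Re (cinner v (M *v v))"
proof -
  have h: "cinner b (M *v v) = cnj (cinner v (M *v b))" by (rule psd_herm_form[OF M])
  have "cinner (b - t *\<^sub>R v) (M *v (b - t *\<^sub>R v)) =
     cinner b (M *v b) - of_real t * cinner b (M *v v) - of_real t * cinner v (M *v b)
       + of_real t * of_real t * cinner v (M *v v)"
    by (simp add: mv_diff mv_scaleR cinner_diff_left cinner_diff_right cinner_scaleR_left cinner_scaleR_right algebra_simps)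
  then show ?thesis by (simp add: h)
qed

lemma psd_CS:
  assumes M: "psd_mat M"
  shows "(if Re (cinner v (M *v v)) > 0 then (Re (cinner v (M *v b)))^2 / Re (cinner v (M *v v)) else 0)
        \<le> Re (cinner b (M *v b))"
proof (cases "Re (cinner v (M *v v)) > 0")
  case True
  define p where "p = Re (cinner v (M *v v))"
  define g where "g = Re (cinner v (M *v b))"
  have "0 \<le> Re (cinner (b - (g/p) *\<^sub>R v) (M *v (b - (g/p) *\<^sub>R v)))" using psd_q[OF M] by blast
  also have "\<dots> = Re (cinner b (M *v b)) - g^2/p"
    unfolding psd_quad[OF M] using True by (simp add: p_def[symmetric] g_def[symmetric] field_simps power2_eq_square)
  finally show ?thesis using True by (simp add: p_def g_def)
next
  case False
  then show ?thesis using psd_q[OF M] by simp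
qed

lemma psd_eq:
  assumes M: "psd_mat M"
    and eq: "Re (cinner b (M *v b)) - (if Re (cinner v (M *v v)) > 0 then (Re (cinner v (M *v b)))^2 / Re (cinner v (M *v v)) else 0) = 0"
  shows "\<exists>t::real. \<forall>y. cinner y (M *v b) = of_real t * cinner y (M *v v)"
proof -
  define p where "p = Re (cinner v (M *v v))"
  define g where "g = Re (cinner v (M *v b))"
  define t where "t = (if p > 0 then g / p else 0)"
  have "Re (cinner (b - t *\<^sub>R v) (M *v (b - t *\<^sub>R v))) = 0"
  proof (cases "p > 0")
    case True
    have Q: "Re (cinner b (M *v b)) = g^2 / p" using eq True unfolding p_def g_def by simp
    have tt: "t = g / p" using True t_def by simp
    have "Re (cinner b (M *v b)) - 2 * t * g + t * t * p = 0"
      unfolding Q tt using True by (simp add: field_simps power2_eq_square)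
    then show ?thesis unfolding psd_quad[OF M] p_def g_def .
  next
    case False
    have Q: "Re (cinner b (M *v b)) = 0" using eq False unfolding p_def g_def by simp
    have tt: "t = 0" using False t_def by simp
    show ?thesis unfolding psd_quad[OF M] Q tt by simp
  qed
  moreover have "Im (cinner (b - t *\<^sub>R v) (M *v (b - t *\<^sub>R v))) = 0" using psd_q[OF M] by blast
  ultimately have z: "cinner (b - t *\<^sub>R v) (M *v (b - t *\<^sub>R v)) = 0" by (simp add: complex_eq_iff)
  show ?thesis
  proof (intro exI allI)
    fix y
    have "cinner y (M *v (b - t *\<^sub>R v)) = 0" by (rule psd_Z[OF M z])
    then show "cinner y (M *v b) = of_real t * cinner y (M *v v)"
      by (simp add: mv_diff mv_scaleR cinner_diff_right cinner_scaleR_right)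
  qed
qed




lemma tr1: "trace ((ket_bra v ** L) ** M) = cinner v (L *v (M *v v))"
proof -
  have "trace ((ket_bra v ** L) ** M) = trace (ket_bra v ** (L ** M))" by (simp only: matrix_mul_assoc)
  also have "\<dots> = cinner v ((L ** M) *v v)" by (rule trace_ketbra_left)
  also have "\<dots> = cinner v (L *v (M *v v))" by (simp only: matrix_vector_mul_assoc)
  finally show ?thesis .
qed

lemma tr2: "trace ((L ** ket_bra v) ** M) = cinner v (M *v (L *v v))"
proof -
  have "trace ((L ** ket_bra v) ** M) = trace (M ** (L ** ket_bra v))" by (rule trace_mul_sym)
  also have "\<dots> = trace ((M ** L) ** ket_bra v)" by (simp only: matrix_mul_assoc)
  also have "\<dots> = trace (ket_bra v ** (M ** L))" by (rule trace_mul_sym)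
  also have "\<dots> = cinner v ((M ** L) *v v)" by (rule trace_ketbra_left)
  also have "\<dots> = cinner v (M *v (L *v v))" by (simp only: matrix_vector_mul_assoc)
  finally show ?thesis .
qed

lemma prob_deriv_form:
  assumes L: "adjoint_mat L = L" and M: "psd_mat M"
  shows "Re (trace (((1/2::real) *\<^sub>R (ket_bra v ** L + L ** ket_bra v)) ** M))
       = Re (cinner v (M *v (L *v v)))"
proof -
  have a: "trace ((ket_bra v ** L) ** M) = cnj (cinner v (M *v (L *v v)))"
  proof -
    have "trace ((ket_bra v ** L) ** M) = cinner v (L *v (M *v v))" by (rule tr1)
    also have "\<dots> = cinner (L *v v) (M *v v)" by (simp only: cinner_matvec_adj L)
    also have "\<dots> = cnj (cinner v (M *v (L *v v)))" by (rule psd_herm_form[OF M])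
    finally show ?thesis .
  qed
  have b: "trace ((L ** ket_bra v) ** M) = cinner v (M *v (L *v v))" by (rule tr2)
  show ?thesis
    by (simp add: mm_scaleR_left matrix_add_rdistrib trace_add trace_scaleR a b)
qed

lemma sld_info_form:
  assumes L: "adjoint_mat L = L"
  shows "Re (trace (L ** ket_bra v ** L)) = Re (cinner (L *v v) (L *v v))"
proof -
  have "trace (L ** ket_bra v ** L) = cinner v (L *v (L *v v))" by (rule tr2)
  also have "\<dots> = cinner (L *v v) (L *v v)" by (simp only: cinner_matvec_adj L)
  finally show ?thesis by simp
qed

lemma sum_mv: "finite I \<Longrightarrow> (\<Sum>m\<in>I. A m) *v (x::complex^'d) = (\<Sum>m\<in>I. A m *v x)"
  by (induct I rule: finite_induct) (auto simp: matrix_vector_mult_add_rdistrib)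

lemma cinner_povm: "is_POVM I M \<Longrightarrow> cinner x y = (\<Sum>m\<in>I. cinner x (M m *v y))"
proof -
  assume P: "is_POVM I M"
  then have "y = (\<Sum>m\<in>I. M m) *v y" unfolding is_POVM_def by simp
  also have "\<dots> = (\<Sum>m\<in>I. M m *v y)" using P sum_mv unfolding is_POVM_def by blast
  finally have "cinner x y = cinner x (\<Sum>m\<in>I. M m *v y)" by simp
  then show ?thesis using P cinner_sum_right unfolding is_POVM_def by metis
qed

definition symv :: "complex^'d \<Rightarrow> complex^'d \<Rightarrow> complex^'d^'d" where
  "symv v w = (\<chi> i k. v$i * cnj (w$k) + w$i * cnj (v$k))"

lemma symv_add: "symv v (w1 + w2) = symv v w1 + symv v w2"
  by (simp add: symv_def vec_eq_iff algebra_simps)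

lemma symv_scale: "symv v (r *\<^sub>R w) = r *\<^sub>R symv v w"
  by (simp add: symv_def vec_eq_iff) (simp add: scaleR_conv_of_real algebra_simps)

lemma symv_zero: "symv v 0 = 0"
  by (simp add: symv_def vec_eq_iff)

lemma symv_lin: "finite J \<Longrightarrow> (\<Sum>j\<in>J. c j *\<^sub>R symv v (w j)) = symv v (\<Sum>j\<in>J. c j *\<^sub>R w j)"
  by (induct J rule: finite_induct) (auto simp: symv_add symv_scale symv_zero)

lemma symv_neg: "symv v ((-a) *\<^sub>R v) = (-2*a) *\<^sub>R ket_bra v"
  by (simp add: symv_def ket_bra_def vec_eq_iff) (simp add: scaleR_conv_of_real algebra_simps)

lemma sld_symv: assumes "adjoint_mat L = L" shows "ket_bra v ** L + L ** ket_bra v = symv v (L *v v)"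
  unfolding ketbra_mult_left mult_ketbra_right symv_def assms by (simp add: vec_eq_iff)

lemma sum_bool_prod: "(\<Sum>q\<in>(UNIV::(bool\<times>'a::finite) set). F q) = (\<Sum>k\<in>UNIV. F (False,k)) + (\<Sum>k\<in>UNIV. F (True,k))"
proof -
  have U: "(UNIV::(bool\<times>'a) set) = {False,True} \<times> UNIV" by auto
  have "(\<Sum>q\<in>(UNIV::(bool\<times>'a) set). F q) = (\<Sum>(x,y)\<in>{False,True} \<times> UNIV. F (x,y))"
    unfolding U by (simp add: case_prod_beta')
  also have "\<dots> = (\<Sum>x\<in>{False,True}. \<Sum>k\<in>UNIV. F (x,k))" by (rule sum.cartesian_product[symmetric])
  finally show ?thesis by simp
qed

lemma scaleR_smult: "r *\<^sub>R ((c::complex) *s x) = c *s (r *\<^sub>R x)"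
  by (simp add: vec_eq_iff)

lemma smult_sum: "finite J \<Longrightarrow> (c::complex) *s (\<Sum>j\<in>J. f j) = (\<Sum>j\<in>J. c *s f j)"
  by (induct J rule: finite_induct) (auto simp: vector_add_ldistrib)

lemma sum_option_UNIV: "(\<Sum>k\<in>(UNIV::'a::finite option set). F k) = F None + (\<Sum>j\<in>UNIV. F (Some j))"
proof -
  have "(\<Sum>k\<in>(UNIV::'a option set). F k) = (\<Sum>k\<in>insert None (range Some). F k)"
    by (simp only: UNIV_option_conv[symmetric])
  also have "\<dots> = F None + (\<Sum>k\<in>range Some. F k)" by (subst sum.insert) auto
  also have "(\<Sum>k\<in>range Some. F k) = (\<Sum>j\<in>UNIV. F (Some j))" by (subst sum.reindex) auto
  finally show ?thesis .
qed

lemma neg_smult: "((-c)::complex) *s x = - (c *s x)"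
  by (simp add: vec_eq_iff)



theorem theorem4p3:
  fixes \<Theta> :: "(real^'p) set"
    and \<psi> :: "real^'p \<Rightarrow> complex^'d"
    and \<theta> :: "real^'p"
    and I :: "'m set" and M :: "'m \<Rightarrow> complex^'d^'d"
  assumes "open \<Theta>"
    and "\<forall>t\<in>\<Theta>. norm (\<psi> t) = 1"
    and "\<forall>t\<in>\<Theta>. (\<lambda>s. ket_bra (\<psi> s)) differentiable (at t)"
    and "nondegenerate (\<lambda>s. ket_bra (\<psi> s)) \<Theta>"
    and "\<theta> \<in> \<Theta>"
    and "is_POVM I M"
    and "fisher_info (\<lambda>s. ket_bra (\<psi> s)) I M \<theta> = SLD_info (\<lambda>s. ket_bra (\<psi> s)) \<theta>"
  shows "CARD('p) \<le> CARD('d) - 1"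
proof -
  let ?r = "\<lambda>s. ket_bra (\<psi> s)"
  define v where "v = \<psi> \<theta>"
  define P where "P = ket_bra v"
  define D where "D = frechet_derivative ?r (at \<theta>)"
  have dif: "?r differentiable (at \<theta>)" using assms(3,5) by blast
  note df = deriv_facts[OF assms(1,2) dif assms(5), folded D_def v_def, folded P_def]
  have vv: "cinner v v = 1" using assms(2,5) by (simp add: v_def cinner_self)
  have trP: "trace P = 1" by (simp add: P_def trace_ketbra vv)
  have linD: "linear D" using df(1) has_derivative_linear by blast
  define Dj where "Dj j = D (axis j 1)" for j
  have pdj: "partial_deriv ?r \<theta> j = Dj j" for j
    by (simp add: partial_deriv_def Dj_def D_def)
  define L where "L j = SLD ?r \<theta> j" for j
  have sld: "adjoint_mat (L j) = L j \<and> Dj j = (1/2::real) *\<^sub>R (P ** L j + L j ** P)" for j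
  proof -
    have h1: "adjoint_mat (2 *\<^sub>R Dj j) = 2 *\<^sub>R Dj j"
    proof -
      have "adjoint_mat (2 *\<^sub>R Dj j) = 2 *\<^sub>R adjoint_mat (Dj j)"
        by (rule linear_scale[OF bounded_linear.linear[OF bl_adj]])
      also have "adjoint_mat (Dj j) = Dj j" unfolding Dj_def by (rule df(2))
      finally show ?thesis .
    qed
    have h2: "Dj j = (1/2::real) *\<^sub>R (P ** (2 *\<^sub>R Dj j) + (2 *\<^sub>R Dj j) ** P)"
    proof -
      have e: "Dj j = P ** Dj j + Dj j ** P" unfolding Dj_def by (rule df(3))
      have "(1/2::real) *\<^sub>R (P ** (2 *\<^sub>R Dj j) + (2 *\<^sub>R Dj j) ** P) = P ** Dj j + Dj j ** P"
        by (simp add: mm_scaleR_left mm_scaleR_right scaleR_add_right)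
      with e show ?thesis by simp
    qed
    have "is_SLD ?r \<theta> j (2 *\<^sub>R Dj j)"
      unfolding is_SLD_def hermitian_mat_def pdj v_def[symmetric] P_def[symmetric] using h1 h2 by blast
    then have "is_SLD ?r \<theta> j (L j)" unfolding L_def SLD_def by (rule someI)
    then show ?thesis unfolding is_SLD_def hermitian_mat_def pdj v_def[symmetric] P_def[symmetric] by blast
  qed
  define b where "b j = L j *v v" for j
  have finI: "finite I" and psdM: "\<And>m. m \<in> I \<Longrightarrow> psd_mat (M m)" using assms(6) unfolding is_POVM_def by auto
  define pp where "pp m = Re (cinner v (M m *v v))" for m
  define gg where "gg m j = Re (cinner v (M m *v b j))" for m j
  define QQ where "QQ m j = Re (cinner (b j) (M m *v b j))" for m j
  define DD where "DD m j = QQ m j - (if pp m > 0 then (gg m j)^2 / pp m else 0)" for m j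
  have op: "outcome_prob ?r M m \<theta> = pp m" for m
    by (simp add: outcome_prob_def pp_def trace_ketbra_left v_def)
  have opd: "m \<in> I \<Longrightarrow> partial_deriv (outcome_prob ?r M m) \<theta> j = gg m j" for m j
  proof -
    assume mI: "m \<in> I"
    have "((\<lambda>s. Re (trace (?r s ** M m))) has_derivative (\<lambda>h. Re (trace (D h ** M m)))) (at \<theta>)"
      by (rule bounded_linear.has_derivative[OF bl_prob df(1)])
    then have "frechet_derivative (outcome_prob ?r M m) (at \<theta>) = (\<lambda>h. Re (trace (D h ** M m)))"
      unfolding outcome_prob_def by (metis frechet_derivative_at)
    then have "partial_deriv (outcome_prob ?r M m) \<theta> j = Re (trace (Dj j ** M m))"
      by (simp add: partial_deriv_def Dj_def)
    also have "\<dots> = gg m j" using sld[of j] prob_deriv_form[OF _ psdM[OF mI], of "L j" v]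
      by (simp add: gg_def b_def P_def)
    finally show ?thesis .
  qed
  have fdiag: "fisher_info ?r I M \<theta> j j = (\<Sum>m\<in>I. if pp m > 0 then (gg m j)^2 / pp m else 0)" for j
  proof -
    have "fisher_info ?r I M \<theta> j j = (\<Sum>m\<in>{m\<in>I. pp m > 0}. (gg m j)^2 / pp m)"
      unfolding fisher_info_def op
      by (rule sum.cong) (auto simp: opd power2_eq_square)
    also have "\<dots> = (\<Sum>m\<in>I. if pp m > 0 then (gg m j)^2 / pp m else 0)"
      using finI by (simp add: sum.inter_filter)
    finally show ?thesis .
  qed
  have hdiag: "SLD_info ?r \<theta> j j = (\<Sum>m\<in>I. QQ m j)" for j
  proof -
    have "SLD_info ?r \<theta> j j = Re (trace (L j ** P ** L j))"
      unfolding SLD_info_def L_def P_def v_def by (rule refl)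
    also have "\<dots> = Re (cinner (b j) (b j))"
      unfolding P_def b_def by (rule sld_info_form[OF sld[of j, THEN conjunct1]])
    also have "cinner (b j) (b j) = (\<Sum>m\<in>I. cinner (b j) (M m *v b j))"
      by (rule cinner_povm[OF assms(6)])
    finally show ?thesis unfolding QQ_def by (simp only: Re_sum)
  qed
  have DD0: "DD m j = 0" if mI: "m \<in> I" for m j
  proof -
    have nn: "DD m j \<ge> 0" if mI: "m \<in> I" for m
    proof -
      have c: "(if Re (cinner v (M m *v v)) > 0 then (Re (cinner v (M m *v b j)))^2 / Re (cinner v (M m *v v)) else 0)
        \<le> Re (cinner (b j) (M m *v b j))" by (rule psd_CS[OF psdM[OF mI]])
      show ?thesis unfolding DD_def QQ_def pp_def gg_def using c by (simp only: diff_ge_0_iff_ge)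
    qed
    have eqFH: "fisher_info ?r I M \<theta> j j = SLD_info ?r \<theta> j j" by (rule fun_cong[OF fun_cong[OF assms(7)]])
    have "(\<Sum>m\<in>I. DD m j) = (\<Sum>m\<in>I. QQ m j) - (\<Sum>m\<in>I. if pp m > 0 then (gg m j)^2 / pp m else 0)"
      unfolding DD_def by (rule sum_subtractf)
    also have "\<dots> = 0" using fdiag[of j] hdiag[of j] eqFH by linarith
    finally have s0: "(\<Sum>m\<in>I. DD m j) = 0" .
    have "\<forall>m\<in>I. DD m j = 0" using sum_nonneg_eq_0_iff[OF finI, of "\<lambda>m. DD m j"] nn s0 by blast
    then show ?thesis using mI by blast
  qed
  have tj: "\<exists>t::real. \<forall>y. cinner y (M m *v b j) = of_real t * cinner y (M m *v v)" if mI: "m \<in> I" for m j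
  proof -
    have "DD m j = 0" by (rule DD0[OF mI])
    then have e: "Re (cinner (b j) (M m *v b j)) - (if Re (cinner v (M m *v v)) > 0 then (Re (cinner v (M m *v b j)))^2 / Re (cinner v (M m *v v)) else 0) = 0"
      unfolding DD_def QQ_def pp_def gg_def .
    show ?thesis by (rule psd_eq[OF psdM[OF mI] e])
  qed
  define u where "u k = (case k of None \<Rightarrow> v | Some j \<Rightarrow> b j)" for k
  have um: "m \<in> I \<Longrightarrow> \<exists>r::'p option \<Rightarrow> real. \<forall>k y. cinner y (M m *v u k) = of_real (r k) * cinner y (M m *v v)" for m
  proof -
    assume mI: "m \<in> I"
    have "\<forall>k. \<exists>t::real. \<forall>y. cinner y (M m *v u k) = of_real t * cinner y (M m *v v)"
    proof
      fix k show "\<exists>t::real. \<forall>y. cinner y (M m *v u k) = of_real t * cinner y (M m *v v)"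
      proof (cases k)
        case None then show ?thesis by (intro exI[of _ 1]) (simp add: u_def)
      next
        case (Some j) then show ?thesis using tj[OF mI, of j] by (simp add: u_def)
      qed
    qed
    then show ?thesis by metis
  qed
  have gram_m: "m \<in> I \<Longrightarrow> Im (cinner (u k) (M m *v u l)) = 0" for m k l
  proof -
    assume mI: "m \<in> I"
    obtain r where r: "\<And>k y. cinner y (M m *v u k) = of_real (r k) * cinner y (M m *v v)"
      using um[OF mI] by blast
    have "cinner (u k) (M m *v u l) = of_real (r l) * cinner (u k) (M m *v v)" by (rule r)
    also have "cinner (u k) (M m *v v) = cnj (cinner v (M m *v u k))" by (rule psd_herm_form[OF psdM[OF mI]])
    also have "cinner v (M m *v u k) = of_real (r k) * cinner v (M m *v v)" by (rule r)
    finally have e: "cinner (u k) (M m *v u l) = of_real (r l) * cnj (of_real (r k) * cinner v (M m *v v))" .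
    have "Im (cinner v (M m *v v)) = 0" using psd_q[OF psdM[OF mI]] by blast
    then show ?thesis unfolding e by simp
  qed
  have gram: "Im (cinner (u k) (u l)) = 0" for k l
    using gram_m by (simp add: cinner_povm[OF assms(6), of "u k" "u l"] Im_sum)
  have gram2: "Im (cinner (\<Sum>k\<in>UNIV. x k *\<^sub>R u k) (\<Sum>l\<in>UNIV. y l *\<^sub>R u l)) = 0" for x y :: "'p option \<Rightarrow> real"
    by (simp add: cinner_sum_left cinner_sum_right cinner_scaleR_left cinner_scaleR_right Im_sum gram)
  have indep_u: "\<forall>k. f k = 0" if f: "(\<Sum>k\<in>UNIV. f k *\<^sub>R u k) = 0" for f :: "'p option \<Rightarrow> real"
  proof -
    define a where "a = f None"
    define c where "c j = f (Some j)" for j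
    have "(\<Sum>k\<in>UNIV. f k *\<^sub>R u k) = a *\<^sub>R v + (\<Sum>j\<in>UNIV. c j *\<^sub>R b j)"
      unfolding sum_option_UNIV by (simp add: a_def c_def u_def)
    with f have cb0: "a *\<^sub>R v + (\<Sum>j\<in>UNIV. c j *\<^sub>R b j) = 0" by simp
    have cb: "(\<Sum>j\<in>UNIV. c j *\<^sub>R b j) = (-a) *\<^sub>R v"
    proof -
      have "(\<Sum>j\<in>UNIV. c j *\<^sub>R b j) = (a *\<^sub>R v + (\<Sum>j\<in>UNIV. c j *\<^sub>R b j)) - a *\<^sub>R v" by simp
      also have "\<dots> = (-a) *\<^sub>R v" unfolding cb0 by simp
      finally show ?thesis .
    qed
    have "(\<Sum>j\<in>UNIV. c j *\<^sub>R Dj j) = (\<Sum>j\<in>UNIV. c j *\<^sub>R ((1/2::real) *\<^sub>R symv v (b j)))"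
      using sld by (simp add: sld_symv P_def b_def)
    also have "\<dots> = (1/2::real) *\<^sub>R (\<Sum>j\<in>UNIV. c j *\<^sub>R symv v (b j))"
      by (simp add: scaleR_sum_right)
    also have "\<dots> = (1/2::real) *\<^sub>R symv v ((-a) *\<^sub>R v)" by (simp add: symv_lin cb)
    also have "\<dots> = (-a) *\<^sub>R P" unfolding symv_neg P_def by simp
    finally have sc: "(\<Sum>j\<in>UNIV. c j *\<^sub>R Dj j) = (-a) *\<^sub>R P" .
    have "(\<Sum>j\<in>UNIV. c j *\<^sub>R Dj j) = D (\<Sum>j\<in>UNIV. c j *\<^sub>R axis j 1)"
      by (simp add: linear_sum[OF linD] linear_scale[OF linD] Dj_def)
    then have "trace (\<Sum>j\<in>UNIV. c j *\<^sub>R Dj j) = 0" using df(4) by simp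
    then have "trace ((-a) *\<^sub>R P) = 0" unfolding sc .
    then have "(-a) *\<^sub>R trace P = 0" by (simp only: trace_scaleR)
    then have a0: "a = 0" using trP by simp
    then have "(\<Sum>j\<in>UNIV. c j *\<^sub>R partial_deriv ?r \<theta> j) = 0" using sc by (simp add: pdj)
    then have "\<forall>j. c j = 0" using assms(4,5) unfolding nondegenerate_def by blast
    then show ?thesis using a0 unfolding a_def c_def by (metis not_None_eq)
  qed
  define g where "g q = (if fst q then \<i> *s u (snd q) else u (snd q))" for q :: "bool \<times> 'p option"
  have indep_g: "\<forall>q. f q = 0" if f: "(\<Sum>q\<in>UNIV. f q *\<^sub>R g q) = 0" for f
  proof -
    define X where "X = (\<Sum>k\<in>UNIV. f (False,k) *\<^sub>R u k)"
    define Y where "Y = (\<Sum>k\<in>UNIV. f (True,k) *\<^sub>R u k)"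
    have "(\<Sum>q\<in>UNIV. f q *\<^sub>R g q) = X + \<i> *s Y"
      unfolding sum_bool_prod X_def Y_def by (simp add: g_def scaleR_smult smult_sum)
    with f have XY0: "X + \<i> *s Y = 0" by simp
    have XY: "X = (-\<i>) *s Y"
    proof -
      have "X = (X + \<i> *s Y) - \<i> *s Y" by simp
      also have "\<dots> = (-\<i>) *s Y" unfolding XY0 neg_smult by simp
      finally show ?thesis .
    qed
    have cXY: "Im (cinner X Y) = 0" unfolding X_def Y_def by (rule gram2)
    have "cinner X X = cinner X ((-\<i>) *s Y)" by (simp only: XY[symmetric])
    also have "\<dots> = - \<i> * cinner X Y" unfolding cinner_scale_right by simp
    finally have "Re (cinner X X) = 0" using cXY by simp
    then have X0: "X = 0" by (simp add: cinner_self)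
    then have "\<i> *s Y = 0" using XY0 by simp
    then have Y0: "Y = 0" by (simp add: vec_eq_iff)
    have fF: "\<forall>k. f (False,k) = 0" using X0 unfolding X_def by (rule indep_u[of "\<lambda>k. f (False,k)"])
    have fT: "\<forall>k. f (True,k) = 0" using Y0 unfolding Y_def by (rule indep_u[of "\<lambda>k. f (True,k)"])
    show ?thesis
    proof
      fix q :: "bool \<times> 'p option"
      obtain x k where "q = (x,k)" by (cases q)
      then show "f q = 0" using fF fT by (cases x) auto
    qed
  qed
  have inj: "inj g"
  proof (rule injI)
    fix q1 q2 assume e: "g q1 = g q2"
    show "q1 = q2"
    proof (rule ccontr)
      assume ne: "q1 \<noteq> q2"
      define f where "f q = (if q = q1 then 1 else if q = q2 then -1 else (0::real))" for q
      have "(\<Sum>q\<in>UNIV. f q *\<^sub>R g q) = (\<Sum>q\<in>UNIV. (if q = q1 then g q else 0) + (if q = q2 then - g q else 0))"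
        by (rule sum.cong) (auto simp: f_def ne)
      also have "\<dots> = (\<Sum>q\<in>UNIV. (if q = q1 then g q else 0)) + (\<Sum>q\<in>UNIV. (if q = q2 then - g q else 0))"
        by (rule sum.distrib)
      also have "\<dots> = g q1 - g q2" by simp
      also have "\<dots> = 0" using e by simp
      finally have "f q1 = 0" using indep_g by blast
      then show False by (simp add: f_def)
    qed
  qed
  have ind: "independent (range g)"
  proof (rule independent_if_scalars_zero)
    show "finite (range g)" by simp
    fix f x assume s: "(\<Sum>x\<in>range g. f x *\<^sub>R x) = 0" and x: "x \<in> range g"
    have "(\<Sum>x\<in>range g. f x *\<^sub>R x) = (\<Sum>q\<in>UNIV. f (g q) *\<^sub>R g q)"
      by (subst sum.reindex[OF inj]) simp
    with s have "\<forall>q. f (g q) = 0" using indep_g[of "\<lambda>q. f (g q)"] by simp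
    then show "f x = 0" using x by auto
  qed
  have "card (range g) \<le> DIM(complex^'d)" using independent_bound[OF ind] by simp
  moreover have "card (range g) = 2 * (CARD('p) + 1)"
  proof -
    have "card (range g) = CARD(bool \<times> 'p option)" by (rule card_image[OF inj])
    also have "\<dots> = 2 * (CARD('p) + 1)"
      by (simp add: UNIV_Times_UNIV[symmetric] card_cartesian_product del: UNIV_Times_UNIV)
    finally show ?thesis .
  qed
  ultimately have "2 * (CARD('p) + 1) \<le> CARD('d) * 2" by simp
  then show ?thesis by simp
qed


end
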